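(* Let $r\ge2$ be a constant and let $\lambda\in O\!\left(\frac{n^{2r-1}}{\log n}\right)$ be polynomial in $n$. For an island model with $\lambda$ islands each running the (1+1) EA on $\mathrm{Fork}_{n,r}$, with any migration topology and/or policy, the expected number of rounds $E(T)$ until some island has the optimum satisfies $E(T)\in O\!\left(\frac{n^{2r}}{\lambda}\right)$.
   Context: $\mathrm{Fork}_{n,r}(x)=n+1$ if $x=0^r1^{n-r}$, $n+2$ if $x=1^{n-r}0^r$ (the optimum), and $|x|_1$ otherwise, for $n\ge 2r$. Island model: $\lambda$ islands, each with a current solution initialized independently and uniformly at random; in each round every island creates an offspring by flipping each bit independently with probability $1/n$ and keeps it if not worse; additionally solutions are occasionally sent to neighbours in a migration graph and accepted if not worse. *)

theory Defs
  imports "HOL-Probability.Probability" "HOL-Library.Landau_Symbols"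
begin

text \<open>Bit strings of length n are functions nat => bool, only positions i < n matter.
  An island configuration with lam islands is a function from island index to bit string;
  only islands j < lam matter.\<close>

type_synonym bits = "nat \<Rightarrow> bool"
type_synonym config = "nat \<Rightarrow> bits"

definition ones :: "nat \<Rightarrow> bits \<Rightarrow> nat" where
  "ones n x = card {i. i < n \<and> x i}"

definition is_opt :: "nat \<Rightarrow> nat \<Rightarrow> bits \<Rightarrow> bool" where
  "is_opt n r x = (\<forall>i<n. x i = (i < n - r))"

definition is_trap :: "nat \<Rightarrow> nat \<Rightarrow> bits \<Rightarrow> bool" where
  "is_trap n r x = (\<forall>i<n. x i = (r \<le> i))"

definition fork :: "nat \<Rightarrow> nat \<Rightarrow> bits \<Rightarrow> nat" where
  "fork n r x = (if is_opt n r x then n + 2 else if is_trap n r x then n + 1 else ones n x)"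

definition mutate :: "nat \<Rightarrow> bits \<Rightarrow> bits pmf" where
  "mutate n x = map_pmf (\<lambda>m i. x i \<noteq> m i)
     (Pi_pmf {..<n} False (\<lambda>_. bernoulli_pmf (1 / real n)))"

definition init_bits :: "nat \<Rightarrow> bits pmf" where
  "init_bits n = Pi_pmf {..<n} False (\<lambda>_. bernoulli_pmf (1 / 2))"

definition island_init :: "nat \<Rightarrow> nat \<Rightarrow> config pmf" where
  "island_init n lam = Pi_pmf {..<lam} (\<lambda>_. False) (\<lambda>_. init_bits n)"

definition accept :: "(bits \<Rightarrow> nat) \<Rightarrow> bits \<Rightarrow> bits \<Rightarrow> bits" where
  "accept f x y = (if f y \<ge> f x then y else x)"

definition mut_round :: "nat \<Rightarrow> nat \<Rightarrow> nat \<Rightarrow> config \<Rightarrow> config pmf" where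
  "mut_round n r lam s = map_pmf
     (\<lambda>ys i. if i < lam then accept (fork n r) (s i) (ys i) else s i)
     (Pi_pmf {..<lam} (\<lambda>_. False) (\<lambda>i. mutate n (s i)))"

text \<open>A migration policy on migration graph E: in round t, given the current configuration,
  it (possibly randomly, possibly adaptively) produces a new configuration in which every island
  either keeps its solution or has accepted a not-worse solution sent by an in-neighbour in E.\<close>
definition valid_migration ::
  "nat \<Rightarrow> nat \<Rightarrow> nat \<Rightarrow> (nat \<times> nat) set \<Rightarrow> (nat \<Rightarrow> config \<Rightarrow> config pmf) \<Rightarrow> bool" where
  "valid_migration n r lam E P =
     (\<forall>t s s'. s' \<in> set_pmf (P t s) \<longrightarrow>
        (\<forall>j<lam. s' j = s j \<or>
           (\<exists>i<lam. (i, j) \<in> E \<and> s' j = s i \<and> fork n r (s i) \<ge> fork n r (s j))))"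

definition hit :: "nat \<Rightarrow> nat \<Rightarrow> nat \<Rightarrow> config \<Rightarrow> bool" where
  "hit n r lam s = (\<exists>j<lam. is_opt n r (s j))"

primrec run :: "nat \<Rightarrow> nat \<Rightarrow> nat \<Rightarrow> (nat \<Rightarrow> config \<Rightarrow> config pmf) \<Rightarrow> nat \<Rightarrow> config pmf" where
  "run n r lam P 0 = island_init n lam"
| "run n r lam P (Suc t) = bind_pmf (run n r lam P t)
     (\<lambda>s. if hit n r lam s then return_pmf s else bind_pmf (mut_round n r lam s) (P t))"

text \<open>E(T) = sum over t of Pr(T > t), T = number of rounds until some island is optimal.\<close>
definition expected_T :: "nat \<Rightarrow> nat \<Rightarrow> nat \<Rightarrow> (nat \<Rightarrow> config \<Rightarrow> config pmf) \<Rightarrow> ennreal" where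
  "expected_T n r lam P =
     (\<Sum>t. ennreal (measure_pmf.prob (run n r lam P t) {s. \<not> hit n r lam s}))"

end

theory Submission
  imports Defs
begin
lemma ones_le: "ones n x \<le> n"
  unfolding ones_def by (rule order.trans[OF card_mono[of "{..<n}"]]) auto

lemma fork_ge_ones: "ones n x \<le> fork n r x"
  using ones_le[of n x] unfolding fork_def by auto

lemma fork_le: "fork n r x \<le> n + 2"
  using ones_le[of n x] unfolding fork_def by auto

lemma fork_opt_iff: "fork n r x \<ge> n + 2 \<longleftrightarrow> is_opt n r x"
  using ones_le[of n x] unfolding fork_def by auto

lemma fork_opt: "is_opt n r x \<Longrightarrow> fork n r x = n + 2"
  unfolding fork_def by auto

lemma ones_full: assumes "ones n x \<ge> n" "i < n" shows "x i"
proof -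
  have "{i. i < n \<and> x i} = {..<n}"
    using assms(1) ones_le[of n x] unfolding ones_def
    by (intro card_subset_eq) auto
  thus ?thesis using assms(2) by auto
qed

lemma ones_upd: assumes "i < n" "\<not> x i" shows "ones n (x(i := True)) = Suc (ones n x)"
proof -
  have "{j. j < n \<and> (x(i := True)) j} = insert i {j. j < n \<and> x j}" using assms by auto
  thus ?thesis unfolding ones_def using assms by simp
qed

lemma accept_ge: "fork n r (accept (fork n r) x y) \<ge> fork n r x"
  unfolding accept_def by auto

lemma accept_ge2: "fork n r (accept (fork n r) x y) \<ge> fork n r y"
  unfolding accept_def by auto

lemma migration_ge:
  assumes "valid_migration n r lam E P" "s' \<in> set_pmf (P t s)" "j < lam"
  shows "fork n r (s' j) \<ge> fork n r (s j)"
  using assms unfolding valid_migration_def by fastforce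

lemma migration_hit:
  assumes "valid_migration n r lam E P" "s' \<in> set_pmf (P t s)" "hit n r lam s"
  shows "hit n r lam s'"
proof -
  obtain j where j: "j < lam" "is_opt n r (s j)" using assms(3) unfolding hit_def by auto
  have "fork n r (s' j) \<ge> n + 2" using migration_ge[OF assms(1,2) j(1)] fork_opt[OF j(2)] by simp
  thus ?thesis unfolding hit_def using j(1) fork_opt_iff by blast
qed

definition D :: "nat \<Rightarrow> nat \<Rightarrow> bits \<Rightarrow> nat" where
  "D n r x = n - min n (fork n r x)"

definition Phi :: "nat \<Rightarrow> nat \<Rightarrow> nat \<Rightarrow> config \<Rightarrow> nat" where
  "Phi n r lam s = (if hit n r lam s then 0 else (\<Sum>j<lam. D n r (s j)))"

lemma D_mono: "fork n r x \<le> fork n r y \<Longrightarrow> D n r y \<le> D n r x"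
  unfolding D_def by auto

lemma D_le: "D n r x \<le> n" unfolding D_def by auto

lemma Phi_le: "Phi n r lam s \<le> lam * n"
proof -
  have "(\<Sum>j<lam. D n r (s j)) \<le> (\<Sum>j<lam. n)" by (intro sum_mono D_le)
  thus ?thesis unfolding Phi_def by auto
qed

lemma pmf_mutate_ge:
  assumes n: "n \<ge> 1" and out: "\<And>i. i \<ge> n \<Longrightarrow> y i = x i"
    and card: "card {i. i < n \<and> x i \<noteq> y i} \<le> k"
  shows "pmf (mutate n x) y \<ge> (1 / real n) ^ k * (1 - 1 / real n) ^ n"
proof -
  define S where "S = {i. i < n \<and> x i \<noteq> y i}"
  define m0 where "m0 = (\<lambda>i. i < n \<and> x i \<noteq> y i)"
  define M where "M = Pi_pmf {..<n} False (\<lambda>_. bernoulli_pmf (1 / real n))"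
  have a0: "0 \<le> 1 / real n" "1 / real n \<le> 1" using n by auto
  have f: "(\<lambda>m i. x i \<noteq> m i) m0 = y" using out unfolding m0_def by (auto simp: fun_eq_iff)
  have "pmf M m0 = (\<Prod>i<n. pmf (bernoulli_pmf (1 / real n)) (m0 i))"
    unfolding M_def by (subst pmf_Pi) (auto simp: m0_def)
  also have "\<dots> = (\<Prod>i<n. if i \<in> S then 1 / real n else 1 - 1 / real n)"
    using a0 by (intro prod.cong) (auto simp: m0_def S_def)
  also have "\<dots> = (1 / real n) ^ card S * (1 - 1 / real n) ^ card ({..<n} - S)"
    by (subst prod.If_cases) (auto simp: S_def Int_absorb1 subset_eq Diff_eq)
  finally have pm: "pmf M m0 = (1 / real n) ^ card S * (1 - 1 / real n) ^ card ({..<n} - S)" .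
  have c1: "(1 / real n) ^ k \<le> (1 / real n) ^ card S"
    using a0 card unfolding S_def by (intro power_decreasing) auto
  have c2: "(1 - 1 / real n) ^ n \<le> (1 - 1 / real n) ^ card ({..<n} - S)"
    using a0 by (intro power_decreasing) (auto intro: order.trans[OF card_mono[of "{..<n}"]])
  have "(1 / real n) ^ k * (1 - 1 / real n) ^ n \<le> pmf M m0"
    unfolding pm using a0 by (intro mult_mono c1 c2) auto
  also have "pmf M m0 = measure M {m0}" by (simp add: measure_pmf_single)
  also have "\<dots> \<le> measure M ((\<lambda>m i. x i \<noteq> m i) -` {y})"
    using f by (intro measure_pmf.finite_measure_mono) auto
  also have "\<dots> = pmf (mutate n x) y" unfolding mutate_def M_def by (simp add: pmf_map)
  finally show ?thesis .
qed


lemma opt_prob: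
  assumes n: "n \<ge> 1" "2 * r \<le> n" and nopt: "\<not> is_opt n r x" and D0: "D n r x = 0"
  shows "measure_pmf.prob (mutate n x) {y. is_opt n r y} \<ge> (1 / real n) ^ (2 * r) * (1 - 1 / real n) ^ n"
proof -
  define y0 where "y0 = (\<lambda>i. if i < n then i < n - r else x i)"
  have opt: "is_opt n r y0" unfolding is_opt_def y0_def by auto
  have fx: "fork n r x \<ge> n" using D0 unfolding D_def by auto
  have sub: "{i. i < n \<and> x i \<noteq> y0 i} \<subseteq> {..<r} \<union> {n - r..<n}"
  proof (cases "is_trap n r x")
    case True
    then show ?thesis using n unfolding is_trap_def y0_def by auto
  next
    case False
    then have "fork n r x = ones n x" using nopt unfolding fork_def by auto
    then have "\<And>i. i < n \<Longrightarrow> x i" using fx ones_full by auto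
    then show ?thesis unfolding y0_def by auto
  qed
  have "card {i. i < n \<and> x i \<noteq> y0 i} \<le> card ({..<r} \<union> {n - r..<n})"
    by (intro card_mono sub) auto
  also have "\<dots> \<le> card {..<r} + card {n - r..<n}" by (rule card_Un_le)
  also have "\<dots> = 2 * r" using n by simp
  finally have c: "card {i. i < n \<and> x i \<noteq> y0 i} \<le> 2 * r" .
  have "(1 / real n) ^ (2 * r) * (1 - 1 / real n) ^ n \<le> pmf (mutate n x) y0"
    by (rule pmf_mutate_ge[OF n(1) _ c]) (auto simp: y0_def)
  also have "\<dots> = measure_pmf.prob (mutate n x) {y0}" by (simp add: measure_pmf_single)
  also have "\<dots> \<le> measure_pmf.prob (mutate n x) {y. is_opt n r y}"
    using opt by (intro measure_pmf.finite_measure_mono) auto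
  finally show ?thesis .
qed

lemma D_step:
  assumes n: "n \<ge> 1"
  shows "(\<integral>\<^sup>+ y. ennreal (D n r (accept (fork n r) x y)) \<partial>mutate n x)
           \<le> ennreal (real (D n r x) * (1 - (1 / real n) * (1 - 1 / real n) ^ n))"
proof -
  define d where "d = D n r x"
  define \<delta> where "\<delta> = (1 / real n) * (1 - 1 / real n) ^ n"
  define M where "M = mutate n x"
  define Z where "Z = {i. i < n \<and> \<not> x i}"
  define Y where "Y = (\<lambda>i. x(i := True)) ` Z"
  have \<delta>: "0 \<le> \<delta>" unfolding \<delta>_def using n by auto
  show ?thesis
  proof (cases "d = 0")
    case True
    have "\<And>y. D n r (accept (fork n r) x y) = 0"
      using True D_mono[OF accept_ge] unfolding d_def by (metis le_zero_eq)
    then show ?thesis by (simp add: True d_def)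
  next
    case False
    then have fx: "fork n r x < n" unfolding d_def D_def by auto
    then have fo: "fork n r x = ones n x" unfolding fork_def by (auto split: if_splits)
    have dZ: "card Z = d"
    proof -
      have "Z = {..<n} - {i. i < n \<and> x i}" unfolding Z_def by auto
      then have "card Z = n - ones n x" unfolding ones_def by (simp only:, subst card_Diff_subset) auto
      thus ?thesis unfolding d_def D_def using fx fo by simp
    qed
    have finZ: "finite Z" unfolding Z_def by auto
    have inj: "inj_on (\<lambda>i. x(i := True)) Z"
      unfolding Z_def inj_on_def by (auto simp: fun_eq_iff)
    have ptw: "ennreal (D n r (accept (fork n r) x y)) + indicator Y y \<le> ennreal (real d)" for y
    proof (cases "y \<in> Y")
      case True
      then obtain i where i: "i \<in> Z" "y = x(i := True)" unfolding Y_def by auto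
      have "ones n y = Suc (ones n x)" using i ones_upd unfolding Z_def by auto
      then have "fork n r y \<ge> Suc (fork n r x)" using fork_ge_ones[of n y r] fo by simp
      then have "fork n r (accept (fork n r) x y) \<ge> Suc (fork n r x)" using accept_ge2[where n=n and r=r and x=x and y=y] by simp
      then have "D n r (accept (fork n r) x y) + 1 \<le> d" unfolding d_def D_def using fx by auto
      then have "real (D n r (accept (fork n r) x y)) + 1 \<le> real d" by linarith
      then have "ennreal (real (D n r (accept (fork n r) x y)) + 1) \<le> ennreal (real d)"
        by (rule ennreal_leI)
      then show ?thesis using True ennreal_plus[of "real (D n r (accept (fork n r) x y))" 1] by simp
    next
      case False
      have "D n r (accept (fork n r) x y) \<le> d" unfolding d_def by (rule D_mono[OF accept_ge])
      then show ?thesis using False by simp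
    qed
    have "(\<integral>\<^sup>+ y. ennreal (D n r (accept (fork n r) x y)) \<partial>M) + emeasure M Y
        = (\<integral>\<^sup>+ y. ennreal (D n r (accept (fork n r) x y)) + indicator Y y \<partial>M)"
      by (subst nn_integral_add) auto
    also have "\<dots> \<le> (\<integral>\<^sup>+ y. ennreal (real d) \<partial>M)" by (intro nn_integral_mono ptw)
    also have "\<dots> = ennreal (real d)" by (simp add: measure_pmf.emeasure_space_1)
    finally have sumle: "(\<integral>\<^sup>+ y. ennreal (D n r (accept (fork n r) x y)) \<partial>M) + emeasure M Y \<le> ennreal (real d)" .
    have "real d * \<delta> = (\<Sum>i\<in>Z. \<delta>)" using dZ by simp
    also have "\<dots> \<le> (\<Sum>i\<in>Z. pmf M (x(i := True)))"
    proof (intro sum_mono)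
      fix i assume "i \<in> Z"
      then have "{j. j < n \<and> x j \<noteq> (x(i := True)) j} = {i}" unfolding Z_def by auto
      then have c1: "card {j. j < n \<and> x j \<noteq> (x(i := True)) j} \<le> 1" by simp
      have "(1 / real n) ^ 1 * (1 - 1 / real n) ^ n \<le> pmf (mutate n x) (x(i := True))"
        by (rule pmf_mutate_ge[OF n _ c1]) (use \<open>i \<in> Z\<close> in \<open>auto simp: Z_def\<close>)
      then show "\<delta> \<le> pmf M (x(i := True))" unfolding \<delta>_def M_def by simp
    qed
    also have "\<dots> = (\<Sum>y\<in>Y. pmf M y)" unfolding Y_def by (simp add: sum.reindex[OF inj])
    also have "\<dots> = measure M Y"
      using finZ unfolding Y_def
      by (simp add: measure_measure_pmf_finite)
    finally have mY: "real d * \<delta> \<le> measure M Y" .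
    define J where "J = (\<integral>\<^sup>+ y. ennreal (D n r (accept (fork n r) x y)) \<partial>M)"
    have "J \<noteq> \<top>"
    proof
      assume "J = \<top>"
      then show False using sumle unfolding J_def[symmetric] by (simp add: top_unique)
    qed
    define I where "I = enn2real J"
    have I: "J = ennreal I" "0 \<le> I" unfolding I_def using \<open>J \<noteq> \<top>\<close> by (auto simp: ennreal_enn2real_if)
    have "ennreal I + ennreal (measure M Y) \<le> ennreal (real d)"
      using sumle unfolding J_def[symmetric] I(1) measure_pmf.emeasure_eq_measure .
    then have "ennreal (I + measure M Y) \<le> ennreal (real d)"
      using I(2) by (subst ennreal_plus) auto
    then have "I + measure M Y \<le> real d" by (simp add: ennreal_le_iff)
    then have "I \<le> real d * (1 - \<delta>)" using mY by (simp add: algebra_simps)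
    then show ?thesis using I unfolding J_def M_def d_def \<delta>_def by simp
  qed
qed

lemma mut_round_component:
  fixes j lam :: nat
  assumes "j < lam"
  shows "map_pmf (\<lambda>ys. ys j) (Pi_pmf {..<lam} (\<lambda>_. False) (\<lambda>i. mutate n (s i))) = mutate n (s j)"
  using assms Pi_pmf_component[of "{..<lam}" j "\<lambda>_. False" "\<lambda>i. mutate n (s i)"] by simp

lemma Phi_step:
  assumes valid: "valid_migration n r lam E P" and n: "n \<ge> 1" and nh: "\<not> hit n r lam s"
  shows "(\<integral>\<^sup>+ s'. ennreal (real (Phi n r lam s')) \<partial>(bind_pmf (mut_round n r lam s) (P t)))
          \<le> ennreal ((1 - (1 / real n) * (1 - 1 / real n) ^ n) * real (Phi n r lam s))"
proof -
  define \<delta> where "\<delta> = (1 / real n) * (1 - 1 / real n) ^ n"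
  define M where "M = Pi_pmf {..<lam} (\<lambda>_. False) (\<lambda>i. mutate n (s i))"
  define g where "g = (\<lambda>ys i. if i < lam then accept (fork n r) (s i) (ys i) else s i)"
  have mr: "mut_round n r lam s = map_pmf g M" unfolding mut_round_def g_def M_def ..
  have inner: "(\<integral>\<^sup>+ s'. ennreal (real (Phi n r lam s')) \<partial>P t s1)
      \<le> (\<Sum>j<lam. ennreal (real (D n r (s1 j))))" for s1
  proof -
    have "(\<integral>\<^sup>+ s'. ennreal (real (Phi n r lam s')) \<partial>P t s1)
        \<le> (\<integral>\<^sup>+ s'. ennreal (real (\<Sum>j<lam. D n r (s1 j))) \<partial>P t s1)"
    proof (intro nn_integral_mono_AE, unfold AE_measure_pmf_iff, intro ballI ennreal_leI)
      fix s' assume s': "s' \<in> set_pmf (P t s1)"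
      have "Phi n r lam s' \<le> (\<Sum>j<lam. D n r (s' j))" unfolding Phi_def by auto
      also have "\<dots> \<le> (\<Sum>j<lam. D n r (s1 j))"
        by (intro sum_mono D_mono migration_ge[OF valid s']) auto
      finally show "real (Phi n r lam s') \<le> real (\<Sum>j<lam. D n r (s1 j))" by (simp only: of_nat_le_iff)
    qed
    also have "\<dots> = ennreal (real (\<Sum>j<lam. D n r (s1 j)))"
      by (simp add: measure_pmf.emeasure_space_1)
    also have "\<dots> = (\<Sum>j<lam. ennreal (real (D n r (s1 j))))"
      by (simp add: ennreal_of_nat_eq_real_of_nat)
    finally show ?thesis .
  qed
  have "(\<integral>\<^sup>+ s'. ennreal (real (Phi n r lam s')) \<partial>(bind_pmf (mut_round n r lam s) (P t)))
      = (\<integral>\<^sup>+ s1. (\<integral>\<^sup>+ s'. ennreal (real (Phi n r lam s')) \<partial>P t s1) \<partial>mut_round n r lam s)"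
    by simp
  also have "\<dots> \<le> (\<integral>\<^sup>+ s1. (\<Sum>j<lam. ennreal (real (D n r (s1 j)))) \<partial>mut_round n r lam s)"
    by (intro nn_integral_mono inner)
  also have "\<dots> = (\<integral>\<^sup>+ ys. (\<Sum>j<lam. ennreal (real (D n r (g ys j)))) \<partial>M)"
    unfolding mr by simp
  also have "\<dots> = (\<Sum>j<lam. (\<integral>\<^sup>+ ys. ennreal (real (D n r (g ys j))) \<partial>M))"
    by (rule nn_integral_sum) auto
  also have "\<dots> = (\<Sum>j<lam. (\<integral>\<^sup>+ y. ennreal (real (D n r (accept (fork n r) (s j) y))) \<partial>mutate n (s j)))"
  proof (intro sum.cong refl)
    fix j assume j: "j \<in> {..<lam}"
    have "(\<integral>\<^sup>+ ys. ennreal (real (D n r (g ys j))) \<partial>M)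
        = (\<integral>\<^sup>+ ys. ennreal (real (D n r (accept (fork n r) (s j) (ys j)))) \<partial>M)"
      using j unfolding g_def by simp
    also have "\<dots> = (\<integral>\<^sup>+ y. ennreal (real (D n r (accept (fork n r) (s j) y))) \<partial>map_pmf (\<lambda>ys. ys j) M)"
      by simp
    also have "\<dots> = (\<integral>\<^sup>+ y. ennreal (real (D n r (accept (fork n r) (s j) y))) \<partial>mutate n (s j))"
      using j unfolding M_def by (subst mut_round_component) auto
    finally show "(\<integral>\<^sup>+ ys. ennreal (real (D n r (g ys j))) \<partial>M)
        = (\<integral>\<^sup>+ y. ennreal (real (D n r (accept (fork n r) (s j) y))) \<partial>mutate n (s j))" .
  qed
  also have "\<dots> \<le> (\<Sum>j<lam. ennreal (real (D n r (s j)) * (1 - \<delta>)))"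
    unfolding \<delta>_def by (intro sum_mono D_step n)
  also have "\<dots> = ennreal (\<Sum>j<lam. real (D n r (s j)) * (1 - \<delta>))"
  proof -
    have q: "(1 - 1 / real n) ^ n \<le> 1" using n by (intro power_le_one) auto
    have "(1 / real n) * (1 - 1 / real n) ^ n \<le> 1 * 1"
      using n q by (intro mult_mono) auto
    then have "0 \<le> 1 - \<delta>" unfolding \<delta>_def by simp
    then show ?thesis by (intro sum_ennreal) auto
  qed
  also have "\<dots> = ennreal ((1 - \<delta>) * real (Phi n r lam s))"
    using nh unfolding Phi_def by (simp add: sum_distrib_left mult.commute)
  finally show ?thesis unfolding \<delta>_def .
qed

lemma NH_step:
  assumes valid: "valid_migration n r lam E P" and n: "n \<ge> 1" "2 * r \<le> n"
    and nh: "\<not> hit n r lam s" and P0: "Phi n r lam s = 0"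
  shows "emeasure (bind_pmf (mut_round n r lam s) (P t)) {s. \<not> hit n r lam s}
          \<le> ennreal ((1 - (1 / real n) ^ (2 * r) * (1 - 1 / real n) ^ n) ^ lam)"
proof -
  define p where "p = (1 / real n) ^ (2 * r) * (1 - 1 / real n) ^ n"
  define NH where "NH = {s. \<not> hit n r lam s}"
  define Opt where "Opt = {y. is_opt n r y}"
  define M where "M = Pi_pmf {..<lam} (\<lambda>_. False) (\<lambda>i. mutate n (s i))"
  define g where "g = (\<lambda>ys i. if i < lam then accept (fork n r) (s i) (ys i) else s i)"
  have mr: "mut_round n r lam s = map_pmf g M" unfolding mut_round_def g_def M_def ..
  have sj: "\<not> is_opt n r (s j) \<and> D n r (s j) = 0" if "j < lam" for j
    using nh P0 that unfolding Phi_def hit_def by (auto simp: sum_eq_0_iff split: if_splits)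
  have inner: "emeasure (P t s1) NH \<le> indicator NH s1" for s1
  proof (cases "s1 \<in> NH")
    case True
    then show ?thesis by (simp add: measure_pmf.measure_le_1 measure_pmf.emeasure_eq_measure)
  next
    case False
    then have "NH \<inter> set_pmf (P t s1) = {}"
      using migration_hit[OF valid] unfolding NH_def by auto
    then have "emeasure (P t s1) NH = 0" by (metis emeasure_Int_set_pmf emeasure_empty)
    then show ?thesis by simp
  qed
  have "emeasure (bind_pmf (mut_round n r lam s) (P t)) NH = (\<integral>\<^sup>+ s1. emeasure (P t s1) NH \<partial>mut_round n r lam s)"
    by simp
  also have "\<dots> \<le> (\<integral>\<^sup>+ s1. indicator NH s1 \<partial>mut_round n r lam s)"
    by (intro nn_integral_mono inner)
  also have "\<dots> = emeasure (mut_round n r lam s) NH" by (rule nn_integral_indicator) simp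
  also have "\<dots> = emeasure M (g -` NH)" unfolding mr by simp
  also have "\<dots> \<le> emeasure M (Pi {..<lam} (\<lambda>_. - Opt))"
  proof (intro emeasure_mono subsetI)
    fix ys assume "ys \<in> g -` NH"
    then have h: "\<not> hit n r lam (g ys)" unfolding NH_def by auto
    show "ys \<in> Pi {..<lam} (\<lambda>_. - Opt)"
    proof
      fix j assume j: "j \<in> {..<lam}"
      show "ys j \<in> - Opt"
      proof
        assume "ys j \<in> Opt"
        then have "fork n r (ys j) = n + 2" unfolding Opt_def by (simp add: fork_opt)
        then have "fork n r (g ys j) \<ge> n + 2" using j accept_ge2[where n=n and r=r and x="s j" and y="ys j"]
          unfolding g_def by simp
        then have "is_opt n r (g ys j)" using fork_opt_iff by blast
        then show False using h j unfolding hit_def by auto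
      qed
    qed
  qed auto
  also have "\<dots> = ennreal (\<Prod>j<lam. measure_pmf.prob (mutate n (s j)) (- Opt))"
    unfolding M_def by (simp add: measure_pmf.emeasure_eq_measure measure_Pi_pmf_Pi)
  also have "\<dots> \<le> ennreal (\<Prod>j<lam. 1 - p)"
  proof (intro ennreal_leI prod_mono conjI)
    fix j assume j: "j \<in> {..<lam}"
    show "0 \<le> measure_pmf.prob (mutate n (s j)) (- Opt)" by simp
    have "measure_pmf.prob (mutate n (s j)) (- Opt) = 1 - measure_pmf.prob (mutate n (s j)) Opt"
      using measure_pmf.prob_compl[of Opt "mutate n (s j)"] by (simp add: Compl_eq_Diff_UNIV)
    also have "\<dots> \<le> 1 - p" using opt_prob[OF n, of "s j"] sj j unfolding p_def Opt_def by auto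
    finally show "measure_pmf.prob (mutate n (s j)) (- Opt) \<le> 1 - p" .
  qed
  also have "\<dots> = ennreal ((1 - p) ^ lam)" by simp
  finally show ?thesis unfolding NH_def p_def .
qed

lemma telescope_bound:
  fixes u a b c :: "nat \<Rightarrow> real" and Q :: real
  assumes uab: "\<And>t. u t = a t + b t" and nn: "\<And>t. 0 \<le> a t" "\<And>t. 0 \<le> b t"
    and u0: "u 0 \<le> 1" and rec: "\<And>t. u (Suc t) \<le> a t + Q * b t"
    and Q: "Q < 1" and ac: "\<And>t. a t \<le> c t"
  shows "(\<Sum>t<N. u t) \<le> 1 / (1 - Q) + (\<Sum>t<N. c t)"
proof -
  have st: "(1 - Q) * b t \<le> u t - u (Suc t)" for t
    using rec[of t] uab[of t] by (simp add: algebra_simps)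
  have "(\<Sum>t<N. (1 - Q) * b t) \<le> (\<Sum>t<N. u t - u (Suc t))" by (intro sum_mono st)
  also have "\<dots> = u 0 - u N" by (rule sum_lessThan_telescope')
  also have "\<dots> \<le> 1" using u0 uab[of N] nn[of N] by (smt (verit))
  finally have "(1 - Q) * (\<Sum>t<N. b t) \<le> 1" by (simp add: sum_distrib_left)
  then have sb: "(\<Sum>t<N. b t) \<le> 1 / (1 - Q)" using Q by (simp add: field_simps)
  have "(\<Sum>t<N. u t) = (\<Sum>t<N. a t) + (\<Sum>t<N. b t)" by (simp add: uab sum.distrib)
  also have "\<dots> \<le> (\<Sum>t<N. c t) + 1 / (1 - Q)" by (intro add_mono sum_mono ac sb)
  finally show ?thesis by simp
qed

lemma geom_min_bound:
  fixes K q :: real and N t0 :: nat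
  assumes "0 \<le> q" "q < 1" "0 \<le> K"
  shows "(\<Sum>t<N. min 1 (K * q ^ t)) \<le> real t0 + K * q ^ t0 / (1 - q)"
proof -
  have "(\<Sum>t<N. min 1 (K * q ^ t)) \<le> (\<Sum>t<t0 + N. min 1 (K * q ^ t))"
    by (intro sum_mono2) (auto simp: assms)
  also have "\<dots> = (\<Sum>t<t0. min 1 (K * q ^ t)) + (\<Sum>k<N. min 1 (K * q ^ (t0 + k)))"
    by (induction N) auto
  also have "\<dots> \<le> (\<Sum>t<t0. 1) + (\<Sum>k<N. K * q ^ t0 * q ^ k)"
    by (intro add_mono sum_mono) (auto simp: power_add mult.assoc)
  also have "(\<Sum>k<N. K * q ^ t0 * q ^ k) = K * q ^ t0 * (\<Sum>k<N. q ^ k)" by (simp add: sum_distrib_left)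
  also have "(\<Sum>k<N. q ^ k) \<le> 1 / (1 - q)"
  proof -
    have "(\<Sum>k<N. q ^ k) = (1 - q ^ N) / (1 - q)" using assms by (subst sum_gp_strict) auto
    also have "\<dots> \<le> 1 / (1 - q)" using assms by (intro divide_right_mono) auto
    finally show ?thesis .
  qed
  then have "K * q ^ t0 * (\<Sum>k<N. q ^ k) \<le> K * q ^ t0 * (1 / (1 - q))"
    using assms by (intro mult_left_mono) auto
  finally show ?thesis by simp
qed

context
  fixes n r lam :: nat and E P
  assumes valid: "valid_migration n r lam E P" and n2: "n \<ge> 2" and nr: "2 * r \<le> n"
begin

abbreviation "\<delta> \<equiv> (1 / real n) * (1 - 1 / real n) ^ n"
abbreviation "pp \<equiv> (1 / real n) ^ (2 * r) * (1 - 1 / real n) ^ n"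

lemma n1: "n \<ge> 1" using n2 by simp

lemma delta_bounds: "0 < \<delta>" "\<delta> \<le> 1"
proof -
  have q: "(1 - 1 / real n) ^ n \<le> 1" "0 < (1 - 1 / real n) ^ n" using n2 by (auto intro: power_le_one)
  show "0 < \<delta>" using q n2 by auto
  have "(1 / real n) * (1 - 1 / real n) ^ n \<le> 1 * 1" using n2 q by (intro mult_mono) auto
  then show "\<delta> \<le> 1" by simp
qed

lemma step_Phi:
  "(\<integral>\<^sup>+ s'. ennreal (real (Phi n r lam s'))
      \<partial>(if hit n r lam s then return_pmf s else bind_pmf (mut_round n r lam s) (P t)))
   \<le> ennreal ((1 - \<delta>) * real (Phi n r lam s))"
proof (cases "hit n r lam s")
  case True
  then show ?thesis by (simp add: Phi_def)
next
  case False
  then show ?thesis using Phi_step[OF valid n1 False] by simp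
qed

lemma F_bound:
  "(\<integral>\<^sup>+ s. ennreal (real (Phi n r lam s)) \<partial>run n r lam P t) \<le> ennreal ((1 - \<delta>) ^ t * (real lam * real n))"
proof (induction t)
  case 0
  have "(\<integral>\<^sup>+ s. ennreal (real (Phi n r lam s)) \<partial>run n r lam P 0) \<le> (\<integral>\<^sup>+ s. ennreal (real lam * real n) \<partial>run n r lam P 0)"
  proof (intro nn_integral_mono ennreal_leI)
    fix s show "real (Phi n r lam s) \<le> real lam * real n"
      using Phi_le[of n r lam s] by (metis of_nat_le_iff of_nat_mult)
  qed
  also have "\<dots> = ennreal (real lam * real n)" by (simp add: measure_pmf.emeasure_space_1)
  finally show ?case by simp
next
  case (Suc t)
  have d: "0 \<le> 1 - \<delta>" using delta_bounds by simp
  have "(\<integral>\<^sup>+ s. ennreal (real (Phi n r lam s)) \<partial>run n r lam P (Suc t))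
      = (\<integral>\<^sup>+ s. (\<integral>\<^sup>+ s'. ennreal (real (Phi n r lam s'))
      \<partial>(if hit n r lam s then return_pmf s else bind_pmf (mut_round n r lam s) (P t))) \<partial>run n r lam P t)"
    by simp
  also have "\<dots> \<le> (\<integral>\<^sup>+ s. ennreal (1 - \<delta>) * ennreal (real (Phi n r lam s)) \<partial>run n r lam P t)"
  proof (intro nn_integral_mono order.trans[OF step_Phi])
    fix s show "ennreal ((1 - \<delta>) * real (Phi n r lam s)) \<le> ennreal (1 - \<delta>) * ennreal (real (Phi n r lam s))"
      by (subst ennreal_mult[OF d]) simp_all
  qed
  also have "\<dots> = ennreal (1 - \<delta>) * (\<integral>\<^sup>+ s. ennreal (real (Phi n r lam s)) \<partial>run n r lam P t)"
    by (rule nn_integral_cmult) simp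
  also have "\<dots> \<le> ennreal (1 - \<delta>) * ennreal ((1 - \<delta>) ^ t * (real lam * real n))"
    by (intro mult_left_mono Suc.IH) simp
  also have "\<dots> = ennreal ((1 - \<delta>) ^ Suc t * (real lam * real n))"
    using d by (simp add: ennreal_mult[symmetric] mult.assoc)
  finally show ?case .
qed

lemma Phi_nz: "Phi n r lam s \<noteq> 0 \<Longrightarrow> \<not> hit n r lam s" by (auto simp: Phi_def)

definition "Aset = {s. Phi n r lam s \<noteq> 0}"
definition "Bset = {s. \<not> hit n r lam s \<and> Phi n r lam s = 0}"
definition "NHset = {s. \<not> hit n r lam s}"

lemma A_bound: "measure_pmf.prob (run n r lam P t) Aset \<le> (1 - \<delta>) ^ t * (real lam * real n)"
proof -
  have "emeasure (run n r lam P t) Aset = (\<integral>\<^sup>+ s. indicator Aset s \<partial>run n r lam P t)"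
    by simp
  also have "\<dots> \<le> (\<integral>\<^sup>+ s. ennreal (real (Phi n r lam s)) \<partial>run n r lam P t)"
    by (intro nn_integral_mono) (auto simp: Aset_def indicator_def)
  also have "\<dots> \<le> ennreal ((1 - \<delta>) ^ t * (real lam * real n))" by (rule F_bound)
  finally show ?thesis
    using delta_bounds by (simp add: measure_pmf.emeasure_eq_measure ennreal_le_iff)
qed

lemma step_NH:
  "emeasure (if hit n r lam s then return_pmf s else bind_pmf (mut_round n r lam s) (P t)) NHset
   \<le> indicator Aset s + ennreal ((1 - pp) ^ lam) * indicator Bset s"
proof (cases "hit n r lam s")
  case True
  then show ?thesis by (simp add: NHset_def indicator_def)
next
  case False
  show ?thesis
  proof (cases "Phi n r lam s = 0")
    case True
    have "s \<in> Bset" using True False by (simp add: Bset_def)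
    have "emeasure (if hit n r lam s then return_pmf s else bind_pmf (mut_round n r lam s) (P t)) NHset
        \<le> ennreal ((1 - pp) ^ lam)" using NH_step[OF valid n1 nr False True, of t] False
      by (simp add: NHset_def)
    also have "\<dots> \<le> indicator Aset s + ennreal ((1 - pp) ^ lam) * indicator Bset s"
      using \<open>s \<in> Bset\<close> by (simp add: add_increasing)
    finally show ?thesis .
  next
    case f2: False
    have "s \<in> Aset" "s \<notin> Bset" using f2 by (simp_all add: Aset_def Bset_def)
    then show ?thesis using False
      by (simp add: measure_pmf.emeasure_eq_measure measure_pmf.measure_le_1)
  qed
qed

lemma u_rec: "measure_pmf.prob (run n r lam P (Suc t)) NHset
   \<le> measure_pmf.prob (run n r lam P t) Aset + (1 - pp) ^ lam * measure_pmf.prob (run n r lam P t) Bset"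
proof -
  have q: "0 \<le> (1 - pp) ^ lam"
  proof -
    have "pp \<le> 1 * 1"
      using n2 by (intro mult_mono power_le_one) auto
    then show ?thesis by simp
  qed
  have "ennreal (measure_pmf.prob (run n r lam P (Suc t)) NHset) = emeasure (run n r lam P (Suc t)) NHset"
    by (simp only: measure_pmf.emeasure_eq_measure)
  also have "emeasure (run n r lam P (Suc t)) NHset
     = (\<integral>\<^sup>+ s. emeasure (if hit n r lam s then return_pmf s else bind_pmf (mut_round n r lam s) (P t)) NHset \<partial>run n r lam P t)"
    by simp
  also have "\<dots> \<le> (\<integral>\<^sup>+ s. indicator Aset s + ennreal ((1 - pp) ^ lam) * indicator Bset s \<partial>run n r lam P t)"
    by (intro nn_integral_mono step_NH)
  also have "\<dots> = emeasure (run n r lam P t) Aset + ennreal ((1 - pp) ^ lam) * emeasure (run n r lam P t) Bset"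
    by (simp add: nn_integral_add nn_integral_cmult)
  also have "\<dots> = ennreal (measure_pmf.prob (run n r lam P t) Aset + (1 - pp) ^ lam * measure_pmf.prob (run n r lam P t) Bset)"
    using q by (simp add: measure_pmf.emeasure_eq_measure ennreal_mult ennreal_plus)
  finally have X: "ennreal (measure_pmf.prob (run n r lam P (Suc t)) NHset) \<le> ennreal (measure_pmf.prob (run n r lam P t) Aset + (1 - pp) ^ lam * measure_pmf.prob (run n r lam P t) Bset)" .
  have "0 \<le> measure_pmf.prob (run n r lam P t) Aset + (1 - pp) ^ lam * measure_pmf.prob (run n r lam P t) Bset"
    using q by simp
  then show ?thesis using X by (simp only: ennreal_le_iff)
qed

lemma u_split: "measure_pmf.prob (run n r lam P t) NHset
   = measure_pmf.prob (run n r lam P t) Aset + measure_pmf.prob (run n r lam P t) Bset"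
proof -
  have "NHset = Aset \<union> Bset" "Aset \<inter> Bset = {}"
    using Phi_nz by (auto simp: NHset_def Aset_def Bset_def)
  then show ?thesis by (simp add: measure_pmf.finite_measure_Union)
qed

end

lemma Q_bound:
  fixes p :: real and lam :: nat
  assumes "0 < p" "p \<le> 1" "lam \<ge> 1"
  shows "(1 - p) ^ lam < 1" "1 / (1 - (1 - p) ^ lam) \<le> 1 + 1 / (real lam * p)"
proof -
  have "(1 - p) ^ lam \<le> (1 - p) ^ 1" using assms by (intro power_decreasing) auto
  then show Q1: "(1 - p) ^ lam < 1" using assms by simp
  have "(1 - p) ^ lam \<le> exp (- p) ^ lam"
    using assms by (intro power_mono) (auto simp: exp_ge_add_one_self[of "-p", simplified])
  also have "\<dots> = exp (- (real lam * p))" by (simp add: exp_of_nat_mult[symmetric])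
  also have "\<dots> = 1 / exp (real lam * p)" by (simp add: exp_minus field_simps)
  also have "\<dots> \<le> 1 / (1 + real lam * p)"
    using assms by (intro divide_left_mono exp_ge_add_one_self) (auto intro!: mult_pos_pos add_pos_nonneg)
  finally have Qb: "(1 - p) ^ lam \<le> 1 / (1 + real lam * p)" .
  have lp: "0 < real lam * p" using assms by auto
  have "real lam * p / (1 + real lam * p) \<le> 1 - (1 - p) ^ lam"
    using Qb lp by (simp add: field_simps)
  moreover have "0 < real lam * p / (1 + real lam * p)" using lp by (auto intro!: divide_pos_pos)
  moreover have "0 < 1 - (1 - p) ^ lam" using Q1 by simp
  ultimately have "1 / (1 - (1 - p) ^ lam) \<le> 1 / (real lam * p / (1 + real lam * p))"
    by (intro divide_left_mono) (simp, simp, rule mult_pos_pos)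
  also have "\<dots> = 1 + 1 / (real lam * p)" using lp assms by (simp add: add_divide_distrib)
  finally show "1 / (1 - (1 - p) ^ lam) \<le> 1 + 1 / (real lam * p)" .
qed

lemma t0_bound:
  fixes K d :: real
  assumes "K \<ge> 1" "0 < d" "d \<le> 1"
  shows "K * (1 - d) ^ nat \<lceil>ln K / d\<rceil> \<le> 1" "real (nat \<lceil>ln K / d\<rceil>) \<le> ln K / d + 1"
proof -
  define t0 where "t0 = nat \<lceil>ln K / d\<rceil>"
  have lnK: "0 \<le> ln K" using assms by simp
  have "ln K / d \<le> real t0" unfolding t0_def by linarith
  then have "ln K \<le> d * real t0" using assms by (simp add: field_simps)
  have "(1 - d) ^ t0 \<le> exp (- d) ^ t0"
    using assms by (intro power_mono) (auto simp: exp_ge_add_one_self[of "-d", simplified])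
  also have "\<dots> = exp (- (d * real t0))" by (simp add: exp_of_nat_mult[symmetric] mult.commute)
  also have "\<dots> \<le> exp (- ln K)" using \<open>ln K \<le> d * real t0\<close> by simp
  also have "\<dots> = 1 / K" using assms by (simp add: exp_minus inverse_eq_divide)
  finally have "(1 - d) ^ t0 \<le> 1 / K" .
  then show "K * (1 - d) ^ nat \<lceil>ln K / d\<rceil> \<le> 1" using assms unfolding t0_def by (simp add: field_simps)
  have "0 \<le> ln K / d" using lnK assms by simp
  then show "real (nat \<lceil>ln K / d\<rceil>) \<le> ln K / d + 1" by linarith
qed

context
  fixes n r lam :: nat and E P
  assumes valid: "valid_migration n r lam E P" and n2: "n \<ge> 2" and nr: "2 * r \<le> n" and lam1: "lam \<ge> 1"
begin

lemma pp_bounds: "0 < pp n r" "pp n r \<le> 1"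
proof -
  have q: "(1 - 1 / real n) ^ n \<le> 1" "0 < (1 - 1 / real n) ^ n" using n2 by (auto intro: power_le_one)
  show "0 < pp n r" using q n2 by auto
  have "pp n r \<le> 1 * 1" using n2 q by (intro mult_mono power_le_one) auto
  then show "pp n r \<le> 1" by simp
qed

lemma expected_bound:
  "expected_T n r lam P \<le> ennreal (2 + 1 / (real lam * pp n r) + (ln (real lam * real n) + 1) / \<delta> n)"
proof -
  define u where "u t = measure_pmf.prob (run n r lam P t) (NHset n r lam)" for t
  define a where "a t = measure_pmf.prob (run n r lam P t) (Aset n r lam)" for t
  define b where "b t = measure_pmf.prob (run n r lam P t) (Bset n r lam)" for t
  define Q where "Q = (1 - pp n r) ^ lam"
  define K where "K = real lam * real n"
  define c where "c t = min 1 (K * (1 - \<delta> n) ^ t)" for t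
  define t0 where "t0 = nat \<lceil>ln K / \<delta> n\<rceil>"
  have K1: "K \<ge> 1"
  proof -
    have "1 * 1 \<le> lam * n" using lam1 n2 by (intro mult_le_mono) auto
    then have "1 \<le> real (lam * n)" by linarith
    then show ?thesis unfolding K_def by simp
  qed
  have db: "0 < \<delta> n" "\<delta> n \<le> 1" using delta_bounds[OF valid n2 nr] by auto
  have Qb: "Q < 1" "1 / (1 - Q) \<le> 1 + 1 / (real lam * pp n r)"
    unfolding Q_def using Q_bound[OF pp_bounds lam1] by auto
  have partial: "(\<Sum>t<N. u t) \<le> 2 + 1 / (real lam * pp n r) + (ln K + 1) / \<delta> n" for N
  proof -
    have "(\<Sum>t<N. u t) \<le> 1 / (1 - Q) + (\<Sum>t<N. c t)"
    proof (rule telescope_bound[where a = a and b = b])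
      show "u t = a t + b t" for t unfolding u_def a_def b_def by (rule u_split[OF valid n2 nr])
      show "0 \<le> a t" "0 \<le> b t" for t unfolding a_def b_def by auto
      show "u 0 \<le> 1" unfolding u_def by simp
      show "u (Suc t) \<le> a t + Q * b t" for t unfolding u_def a_def b_def Q_def by (rule u_rec[OF valid n2 nr])
      show "Q < 1" by (rule Qb)
      show "a t \<le> c t" for t unfolding a_def c_def K_def using A_bound[OF valid n2 nr, of t]
        by (simp add: mult.commute)
    qed
    also have "(\<Sum>t<N. c t) \<le> real t0 + K * (1 - \<delta> n) ^ t0 / (1 - (1 - \<delta> n))"
      unfolding c_def by (rule geom_min_bound) (use db K1 in linarith)+
    also have "\<dots> \<le> (ln K / \<delta> n + 1) + 1 / \<delta> n"
    proof -
      have h1: "K * (1 - \<delta> n) ^ t0 \<le> 1" "real t0 \<le> ln K / \<delta> n + 1"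
        using t0_bound[OF K1 db] unfolding t0_def by auto
      have e: "1 - (1 - \<delta> n) = \<delta> n" by simp
      have "K * (1 - \<delta> n) ^ t0 / \<delta> n \<le> 1 / \<delta> n"
        by (rule divide_right_mono[OF h1(1)]) (use db in linarith)
      then show ?thesis unfolding e using h1(2) by linarith
    qed
    finally have "(\<Sum>t<N. u t) \<le> 1 / (1 - Q) + (ln K / \<delta> n + 1 + 1 / \<delta> n)" by simp
    moreover have "ln K / \<delta> n + 1 + 1 / \<delta> n = (ln K + 1) / \<delta> n + 1"
      using add_divide_distrib[of "ln K" 1 "\<delta> n"] by linarith
    ultimately show ?thesis using Qb(2) by linarith
  qed
  have "expected_T n r lam P = (\<Sum>t. ennreal (u t))"
    unfolding expected_T_def u_def NHset_def[OF valid n2 nr] by simp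
  also have "\<dots> \<le> ennreal (2 + 1 / (real lam * pp n r) + (ln K + 1) / \<delta> n)"
  proof -
    have "(\<Sum>t. ennreal (u t)) + 0 \<le> ennreal (2 + 1 / (real lam * pp n r) + (ln K + 1) / \<delta> n)"
    proof (rule ennreal_suminf_bound_add)
      fix N
      have "(\<Sum>t<N. ennreal (u t)) = ennreal (\<Sum>t<N. u t)" unfolding u_def by simp
      then show "(\<Sum>t<N. ennreal (u t)) + 0 \<le> ennreal (2 + 1 / (real lam * pp n r) + (ln K + 1) / \<delta> n)"
        using partial[of N] by (simp add: ennreal_leI)
    qed
    then show ?thesis by simp
  qed
  finally show ?thesis unfolding K_def .
qed

end

lemma q_lower:
  assumes "n \<ge> (2::nat)"
  shows "exp (-2) \<le> (1 - 1 / real n) ^ n"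
proof -
  have x: "0 \<le> 1 / real n" "1 / real n \<le> 1/2" using assms by auto
  have pos: "0 < 1 - 1 / real n" using assms by auto
  have "- (1 / real n) - 2 * (1 / real n)\<^sup>2 \<le> ln (1 - 1 / real n)"
    by (rule ln_one_minus_pos_lower_bound[OF x])
  then have "real n * (- (1 / real n) - 2 * (1 / real n)\<^sup>2) \<le> real n * ln (1 - 1 / real n)"
    by (intro mult_left_mono) auto
  moreover have "real n * (- (1 / real n) - 2 * (1 / real n)\<^sup>2) = -1 - 2 / real n"
    using assms by (simp add: field_simps power2_eq_square)
  moreover have "2 / real n \<le> 1" using assms by auto
  ultimately have "-2 \<le> real n * ln (1 - 1 / real n)" by linarith
  then have "exp (-2) \<le> exp (real n * ln (1 - 1 / real n))" by simp
  also have "\<dots> = (1 - 1 / real n) ^ n"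
    using pos by (simp add: ln_realpow[symmetric])
  finally show ?thesis .
qed

lemma final_arith:
  fixes N l L q B k :: real and r :: nat
  assumes N: "N \<ge> 3" and l: "l \<ge> 1" and L: "L = ln N" and q: "exp (-2) \<le> q" "q \<le> 1"
    and B: "B > 0" and k: "k \<ge> 0" and lB: "l * L \<le> B * N ^ (2 * r - 1)" and lk: "ln l \<le> k * L"
    and r: "r \<ge> 1"
  shows "2 + 1 / (l * ((1 / N) ^ (2 * r) * q)) + (ln (l * N) + 1) / ((1 / N) * q)
         \<le> (exp 2 + exp 2 * (k + 2) * B + 2 * B) * N ^ (2 * r) / l"
proof -
  define X where "X = N ^ (2 * r) / l"
  have qpos: "q > 0" using q(1) by (smt (verit) exp_gt_zero)
  have iq: "1 / q \<le> exp 2"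
  proof -
    have "1 / q \<le> 1 / exp (-2)" using q qpos by (intro divide_left_mono) auto
    then show ?thesis by (simp add: exp_minus inverse_eq_divide)
  qed
  have L1: "L \<ge> 1"
  proof -
    have "exp (1::real) \<le> 3" using exp_le by simp
    then have "exp 1 \<le> N" using N by simp
    then have "ln (exp 1) \<le> ln N" using N by (subst ln_le_cancel_iff) auto
    then show ?thesis using L by simp
  qed
  have Npos: "N > 0" using N by simp
  have Xpos: "X \<ge> 0" unfolding X_def using l N by simp
  have NL: "N * L \<le> B * X"
  proof -
    have "N * (l * L) \<le> N * (B * N ^ (2 * r - 1))" using lB Npos by (intro mult_left_mono) auto
    also have "N * (B * N ^ (2 * r - 1)) = B * N ^ (2 * r)"
    proof -
      have "N * N ^ (2 * r - 1) = N ^ (2 * r)" using r by (simp add: power_eq_if)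
      then show ?thesis by (simp add: algebra_simps)
    qed
    finally have "(N * L) * l \<le> B * N ^ (2 * r)" by (simp add: algebra_simps)
    then show ?thesis unfolding X_def using l by (simp add: field_simps)
  qed
  have T1: "1 / (l * ((1 / N) ^ (2 * r) * q)) \<le> exp 2 * X"
  proof -
    have "1 / (l * ((1 / N) ^ (2 * r) * q)) = X * (1 / q)"
      unfolding X_def using Npos qpos l by (simp add: field_simps power_one_over)
    also have "\<dots> \<le> X * exp 2" using iq Xpos by (intro mult_left_mono) auto
    finally show ?thesis by (simp add: mult.commute)
  qed
  have T2: "(ln (l * N) + 1) / ((1 / N) * q) \<le> exp 2 * (k + 2) * (N * L)"
  proof -
    have "ln (l * N) = ln l + L" using L l Npos by (simp add: ln_mult)
    then have "ln (l * N) + 1 \<le> (k + 2) * L" using lk L1 by (simp add: algebra_simps)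
    moreover have "0 \<le> ln (l * N) + 1" using \<open>ln (l * N) = ln l + L\<close> l L1 by simp
    ultimately have "(ln (l * N) + 1) * (N * (1 / q)) \<le> ((k + 2) * L) * (N * exp 2)"
      using Npos qpos iq by (intro mult_mono) auto
    moreover have "(ln (l * N) + 1) / ((1 / N) * q) = (ln (l * N) + 1) * (N * (1 / q))"
      using Npos qpos by (simp add: field_simps)
    ultimately show ?thesis by (simp add: algebra_simps)
  qed
  have T0: "2 \<le> 2 * B * X"
  proof -
    have "1 * 1 \<le> N * L" using N L1 by (intro mult_mono) auto
    then show ?thesis using NL by linarith
  qed
  have "2 + 1 / (l * ((1 / N) ^ (2 * r) * q)) + (ln (l * N) + 1) / ((1 / N) * q)
        \<le> 2 * B * X + exp 2 * X + exp 2 * (k + 2) * (B * X)"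
  proof -
    have "exp 2 * (k + 2) * (N * L) \<le> exp 2 * (k + 2) * (B * X)"
      using NL k by (intro mult_left_mono) auto
    then show ?thesis using T0 T1 T2 by linarith
  qed
  also have "\<dots> = (exp 2 + exp 2 * (k + 2) * B + 2 * B) * X" by (simp add: algebra_simps)
  finally show ?thesis unfolding X_def by simp
qed

theorem lemma3:
  fixes r :: nat and lam :: "nat \<Rightarrow> nat"
  assumes "r \<ge> 2"
    and "(\<lambda>n. real (lam n)) \<in> O(\<lambda>n. real n ^ (2 * r - 1) / ln (real n))"
    and "\<exists>k. \<forall>\<^sub>F n in sequentially. lam n \<le> n ^ k"
    and "\<forall>n. lam n \<ge> 1"
  shows "\<exists>C>0. \<forall>\<^sub>F n in sequentially. \<forall>E P. valid_migration n r (lam n) E P \<longrightarrow>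
           expected_T n r (lam n) P \<le> ennreal (C * real n ^ (2 * r) / real (lam n))"
proof -
  obtain B where B: "B > 0"
    and ev1: "\<forall>\<^sub>F n in sequentially. norm (real (lam n)) \<le> B * norm (real n ^ (2 * r - 1) / ln (real n))"
    using assms(2) by (elim landau_o.bigE)
  obtain k where ev2: "\<forall>\<^sub>F n in sequentially. lam n \<le> n ^ k" using assms(3) by blast
  define C where "C = exp 2 + exp 2 * (real k + 2) * B + 2 * B"
  have Cpos: "C > 0" unfolding C_def using B by (intro add_pos_nonneg) auto
  have ev3: "\<forall>\<^sub>F n in sequentially. n \<ge> max 3 (2 * r)" by (rule eventually_ge_at_top)
  have "\<forall>\<^sub>F n in sequentially. \<forall>E P. valid_migration n r (lam n) E P \<longrightarrow>
           expected_T n r (lam n) P \<le> ennreal (C * real n ^ (2 * r) / real (lam n))"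
    using ev1 ev2 ev3
  proof eventually_elim
    case (elim n)
    have n3: "n \<ge> 3" and nr: "2 * r \<le> n" using elim(3) by auto
    have n2: "n \<ge> 2" using n3 by simp
    have lam1: "lam n \<ge> 1" using assms(4) by simp
    have lnpos: "ln (real n) > 0" using n3 by simp
    have npos: "real n > 0" using n3 by simp
    have lB: "real (lam n) * ln (real n) \<le> B * real n ^ (2 * r - 1)"
    proof -
      have "real (lam n) \<le> B * (real n ^ (2 * r - 1) / ln (real n))"
        using elim(1) lnpos npos by simp
      then have "real (lam n) * ln (real n) \<le> B * (real n ^ (2 * r - 1) / ln (real n)) * ln (real n)"
        using lnpos by (intro mult_right_mono) auto
      also have "\<dots> = B * real n ^ (2 * r - 1)" using lnpos by simp
      finally show ?thesis .
    qed
    have lk: "ln (real (lam n)) \<le> real k * ln (real n)"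
    proof -
      have "real (lam n) \<le> real n ^ k" using elim(2) by (metis of_nat_le_iff of_nat_power)
      then have "ln (real (lam n)) \<le> ln (real n ^ k)" using lam1 npos by (subst ln_le_cancel_iff) auto
      also have "\<dots> = real k * ln (real n)" using npos by (simp add: ln_realpow)
      finally show ?thesis .
    qed
    have fa: "2 + 1 / (real (lam n) * ((1 / real n) ^ (2 * r) * (1 - 1 / real n) ^ n))
         + (ln (real (lam n) * real n) + 1) / ((1 / real n) * (1 - 1 / real n) ^ n)
         \<le> C * real n ^ (2 * r) / real (lam n)"
      unfolding C_def
    proof (rule final_arith[OF _ _ refl q_lower[OF n2] _ B _ lB lk])
      show "3 \<le> real n" using n3 by simp
      show "1 \<le> real (lam n)" using lam1 by simp
      show "(1 - 1 / real n) ^ n \<le> 1" using n2 by (intro power_le_one) auto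
      show "0 \<le> real k" by simp
      show "1 \<le> r" using assms(1) by simp
    qed
    show ?case
    proof (intro allI impI)
      fix E P assume valid: "valid_migration n r (lam n) E P"
      have "expected_T n r (lam n) P \<le> ennreal (2 + 1 / (real (lam n) * pp n r) + (ln (real (lam n) * real n) + 1) / \<delta> n)"
        by (rule expected_bound[OF valid n2 nr lam1])
      also have "\<dots> \<le> ennreal (C * real n ^ (2 * r) / real (lam n))"
        using fa by (intro ennreal_leI) simp
      finally show "expected_T n r (lam n) P \<le> ennreal (C * real n ^ (2 * r) / real (lam n))" .
    qed
  qed
  then show ?thesis using Cpos by blast
qed

end
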